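(* For every $n\ge1$, the map sending a nonempty finite sequence $(P_1,\dots,P_j)$ of indecomposable Dyck paths, taken up to cyclic rotation of the sequence, to the necklace of the word $P_1P_2\cdots P_j$ (each path written as a word in $\nearrow,\searrow$, i.e. in $\circ,\bullet$) is a bijection between cyclic sequences of indecomposable Dyck paths of total length $2n$ and $(1,1)$-balanced necklaces of length $2n$. Equivalently, $Cyc_{(1,1)}\simeq Cyc(\nearrow\mathcal{D}\searrow)$ as combinatorial classes (size = length). *)

theory Defs
  imports Main
begin

text \<open>Words over the alphabet {up, down}: True = up step (white, circ),
  False = down step (black, bullet).\<close>

definition height :: "bool list \<Rightarrow> int" where
  "height w = int (count_list w True) - int (count_list w False)"

definition dyck :: "bool list \<Rightarrow> bool" where
  "dyck w \<longleftrightarrow> height w = 0 \<and> (\<forall>k \<le> length w. height (take k w) \<ge> 0)"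

definition indec_dyck :: "bool list \<Rightarrow> bool" where
  "indec_dyck w \<longleftrightarrow> dyck w \<and> w \<noteq> [] \<and>
     (\<forall>k. 0 < k \<and> k < length w \<longrightarrow> height (take k w) > 0)"

definition rot_class :: "'a list \<Rightarrow> 'a list set" where
  "rot_class xs = {rotate k xs | k. True}"

definition cyc_seqs :: "nat \<Rightarrow> bool list list set set" where
  "cyc_seqs n = rot_class ` {ps. ps \<noteq> [] \<and> (\<forall>p\<in>set ps. indec_dyck p)
                                  \<and> length (concat ps) = 2 * n}"

definition balanced_necklaces :: "nat \<Rightarrow> bool list set set" where
  "balanced_necklaces n = rot_class ` {w. length w = 2 * n \<and>
                                          count_list w True = count_list w False}"

definition cyc_to_necklace :: "bool list list set \<Rightarrow> bool list set" where
  "cyc_to_necklace C = the_elem ((\<lambda>ps. rot_class (concat ps)) ` C)"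

end

theory Submission
  imports Defs
begin

lemma height_Nil[simp]: "height [] = 0"
  by (simp add: height_def)

lemma height_append: "height (xs @ ys) = height xs + height ys"
  by (simp add: height_def)

lemma height_take_add: "height (take (k+j) w) = height (take k w) + height (take j (drop k w))"
  by (simp add: take_add height_append)

lemma dyck_prefix: "dyck w \<Longrightarrow> height (take k w) \<ge> 0"
  unfolding dyck_def by (cases "k \<le> length w") auto

lemma dyck_append: assumes "dyck a" "dyck b" shows "dyck (a @ b)"
  unfolding dyck_def
proof (intro conjI allI impI)
  show "height (a @ b) = 0" using assms by (simp add: dyck_def height_append)
  fix k assume "k \<le> length (a @ b)"
  show "0 \<le> height (take k (a @ b))"
  proof (cases "k \<le> length a")
    case True thus ?thesis using dyck_prefix[OF assms(1), of k] by simp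
  next
    case False thus ?thesis using dyck_prefix[OF assms(2), of "k - length a"] assms(1)
      by (simp add: height_append dyck_def)
  qed
qed

lemma dyck_Nil: "dyck []" by (simp add: dyck_def)

lemma dyck_concat: "\<forall>p\<in>set ps. indec_dyck p \<Longrightarrow> dyck (concat ps)"
  by (induction ps) (auto simp: dyck_Nil indec_dyck_def intro: dyck_append)

lemma rotate_le: "k \<le> length w \<Longrightarrow> rotate k w = drop k w @ take k w"
  using rotate_append[of "take k w" "drop k w"] by simp

lemma rot_class_rotate: "rot_class (rotate k xs) = rot_class xs"
proof (cases "xs = []")
  case True thus ?thesis by simp
next
  case False
  show ?thesis
  proof
    show "rot_class (rotate k xs) \<subseteq> rot_class xs"
      by (auto simp: rot_class_def rotate_rotate)
    show "rot_class xs \<subseteq> rot_class (rotate k xs)"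
    proof
      fix y assume "y \<in> rot_class xs"
      then obtain m where y: "y = rotate m xs" by (auto simp: rot_class_def)
      have "rotate (m + (length xs - 1) * k) (rotate k xs) = rotate (m + (length xs - 1) * k + k) xs"
        by (simp add: rotate_rotate)
      also have "m + (length xs - 1) * k + k = m + length xs * k"
        using False by (cases "length xs") auto
      also have "rotate (m + length xs * k) xs = rotate m xs"
        by (metis rotate_conv_mod mod_mult_self2 mult.commute)
      finally have "y = rotate (m + (length xs - 1) * k) (rotate k xs)" using y by simp
      thus "y \<in> rot_class (rotate k xs)" unfolding rot_class_def by blast
    qed
  qed
qed

lemma mem_rot_class: assumes "ys \<in> rot_class xs" shows "rot_class ys = rot_class xs"
proof -
  obtain k where "ys = rotate k xs" using assms unfolding rot_class_def by blast
  thus ?thesis by (simp add: rot_class_rotate)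
qed

lemma concat_rotate: "\<exists>j. concat (rotate k ps) = rotate j (concat ps)"
proof (induction k)
  case 0 thus ?case by (rule exI[of _ 0]) simp
next
  case (Suc k)
  then obtain j where j: "concat (rotate k ps) = rotate j (concat ps)" by blast
  show ?case
  proof (cases "rotate k ps")
    case Nil thus ?thesis using j by (simp add: rotate_Suc)
  next
    case (Cons q qs)
    have "concat (rotate (Suc k) ps) = concat qs @ q" using Cons by (simp add: rotate_Suc)
    also have "\<dots> = rotate (length q) (q @ concat qs)" by (simp add: rotate_append)
    also have "q @ concat qs = rotate j (concat ps)" using j Cons by simp
    finally show ?thesis by (auto simp: rotate_rotate)
  qed
qed

lemma image_rot_class:
  "(\<lambda>ps. rot_class (concat ps)) ` rot_class ps = {rot_class (concat ps)}"
proof -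
  have "\<And>k. rot_class (concat (rotate k ps)) = rot_class (concat ps)"
  proof -
    fix k obtain j where "concat (rotate k ps) = rotate j (concat ps)" using concat_rotate by blast
    thus "rot_class (concat (rotate k ps)) = rot_class (concat ps)" by (simp add: rot_class_rotate)
  qed
  moreover have "ps \<in> rot_class ps" unfolding rot_class_def by (auto intro: exI[of _ 0])
  ultimately show ?thesis unfolding rot_class_def[of ps] by auto
qed

lemma cyc_to_necklace_rc: "cyc_to_necklace (rot_class ps) = rot_class (concat ps)"
  unfolding cyc_to_necklace_def image_rot_class by simp

lemma boundary:
  "\<forall>p\<in>set ps. indec_dyck p \<Longrightarrow> height (take m (concat ps)) = 0 \<Longrightarrow> m \<le> length (concat ps)
   \<Longrightarrow> \<exists>i. m = length (concat (take i ps))"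
proof (induction ps arbitrary: m)
  case Nil thus ?case by (intro exI[of _ 0]) simp
next
  case (Cons p ps)
  have ip: "indec_dyck p" using Cons.prems by simp
  show ?case
  proof (cases "m = 0")
    case True thus ?thesis by (intro exI[of _ 0]) simp
  next
    case False
    show ?thesis
    proof (cases "m < length p")
      case True
      then have "height (take m p) > 0" using ip False unfolding indec_dyck_def by auto
      thus ?thesis using Cons.prems True by simp
    next
      case nl: False
      have hp: "height p = 0" using ip by (simp add: indec_dyck_def dyck_def)
      have "take m (concat (p # ps)) = p @ take (m - length p) (concat ps)" using nl by simp
      hence "height (take (m - length p) (concat ps)) = 0" using Cons.prems hp by (simp add: height_append)
      moreover have "m - length p \<le> length (concat ps)" using Cons.prems by simp
      ultimately obtain i where "m - length p = length (concat (take i ps))" using Cons.IH Cons.prems by auto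
      hence "m = length (concat (take (Suc i) (p # ps)))" using nl by simp
      thus ?thesis by blast
    qed
  qed
qed

lemma indec_prefix_eq:
  assumes "indec_dyck p" "indec_dyck q" "p @ X = q @ Y" shows "p = q"
proof -
  have lt: False if "indec_dyck p" "indec_dyck q" "p @ X = q @ Y" "length p < length q" for p q X Y
  proof -
    have "take (length p) (p @ X) = take (length p) (q @ Y)" using that by simp
    hence "take (length p) q = p" using that(4) by simp
    moreover have "height p = 0" using that(1) by (simp add: indec_dyck_def dyck_def)
    moreover have "length p > 0" using that(1) by (simp add: indec_dyck_def)
    ultimately show False using that(2,4) unfolding indec_dyck_def by force
  qed
  have "length p = length q"
    using lt[OF assms] lt[OF assms(2,1) assms(3)[symmetric]] by (meson linorder_neqE_nat)
  thus ?thesis using assms(3) by (simp add: append_eq_append_conv)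
qed

lemma unique_fact:
  "\<forall>p\<in>set ps. indec_dyck p \<Longrightarrow> \<forall>q\<in>set qs. indec_dyck q \<Longrightarrow> concat ps = concat qs \<Longrightarrow> ps = qs"
proof (induction ps arbitrary: qs)
  case Nil
  thus ?case by (cases qs) (auto simp: indec_dyck_def)
next
  case (Cons p ps)
  note IH = Cons.IH and pr = Cons.prems
  show ?case
  proof (cases qs)
    case Nil thus ?thesis using pr by (auto simp: indec_dyck_def)
  next
    case qc: (Cons q qs')
    have e: "p @ concat ps = q @ concat qs'" using qc pr(3) by simp
    have ip: "indec_dyck p" using pr(1) by simp
    have iq: "indec_dyck q" using pr(2) qc by simp
    have pq: "p = q" using indec_prefix_eq[OF ip iq e] .
    hence "concat ps = concat qs'" using e by simp
    moreover have "\<forall>p\<in>set ps. indec_dyck p" using pr(1) by simp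
    moreover have "\<forall>q\<in>set qs'. indec_dyck q" using pr(2) qc by simp
    ultimately have "ps = qs'" using IH by blast
    thus ?thesis using pq qc by simp
  qed
qed

lemma key:
  assumes ps: "\<forall>p\<in>set ps. indec_dyck p" and qs: "\<forall>q\<in>set qs. indec_dyck q"
    and eq: "concat qs = rotate m (concat ps)"
  shows "\<exists>i. qs = rotate i ps"
proof (cases "concat ps = []")
  case True
  hence "ps = []" using ps by (cases ps) (auto simp: indec_dyck_def)
  moreover have "qs = []" using eq True qs by (cases qs) (auto simp: indec_dyck_def)
  ultimately show ?thesis by auto
next
  case False
  define u where "u = concat ps"
  define m' where "m' = m mod length u"
  have m'lt: "m' < length u" using False by (simp add: u_def m'_def)
  have rot: "rotate m u = drop m' u @ take m' u"
    by (simp add: rotate_drop_take m'_def)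
  have du: "dyck u" using dyck_concat[OF ps] by (simp add: u_def)
  have dq: "dyck (drop m' u @ take m' u)" using dyck_concat[OF qs] eq rot by (simp add: u_def)
  have "height (take (length (drop m' u)) (drop m' u @ take m' u)) \<ge> 0"
    using dq dyck_prefix by blast
  hence h1: "height (drop m' u) \<ge> 0" by simp
  have "height u = 0" using du by (simp add: dyck_def)
  hence "height (take m' u) + height (drop m' u) = 0"
    by (metis append_take_drop_id height_append)
  hence h0: "height (take m' u) = 0" using h1 dyck_prefix[OF du, of m'] by linarith
  obtain i where i: "m' = length (concat (take i ps))"
    using boundary[OF ps, of m'] h0 m'lt by (auto simp: u_def)
  have ilt: "i < length ps"
  proof (rule ccontr)
    assume "\<not> i < length ps" hence "take i ps = ps" by simp
    thus False using i m'lt by (simp add: u_def)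
  qed
  have ucat: "u = concat (take i ps) @ concat (drop i ps)"
    by (simp add: u_def flip: concat_append)
  have "drop m' u = concat (drop i ps)" "take m' u = concat (take i ps)"
    using ucat i by simp_all
  hence "concat qs = concat (rotate i ps)"
    using eq rot ilt by (simp add: rotate_drop_take u_def)
  hence "qs = rotate i ps" using unique_fact[OF qs, of "rotate i ps"] ps by simp
  thus ?thesis by blast
qed

lemma factorize: "dyck w \<Longrightarrow> \<exists>ps. (\<forall>p\<in>set ps. indec_dyck p) \<and> concat ps = w"
proof (induction "length w" arbitrary: w rule: less_induct)
  case less
  show ?case
  proof (cases "w = []")
    case True thus ?thesis by (intro exI[of _ "[]"]) simp
  next
    case False
    define P where "P = (\<lambda>k. 0 < k \<and> height (take k w) = 0)"
    define k where "k = (LEAST k. P k)"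
    have Pl: "P (length w)" using False less.prems by (simp add: P_def dyck_def)
    have Pk: "P k" unfolding k_def by (rule LeastI[of P, OF Pl])
    have kle: "k \<le> length w" unfolding k_def by (rule Least_le[of P, OF Pl])
    have nk: "\<And>j. j < k \<Longrightarrow> \<not> P j" unfolding k_def by (rule not_less_Least)
    have ind: "indec_dyck (take k w)"
      unfolding indec_dyck_def dyck_def
    proof (intro conjI allI impI)
      show "height (take k w) = 0" using Pk by (simp add: P_def)
      fix j show "0 \<le> height (take j (take k w))"
        using dyck_prefix[OF less.prems, of "min j k"] by (simp add: min_def)
    next
      show "take k w \<noteq> []" using Pk False by (simp add: P_def)
    next
      fix j assume "0 < j \<and> j < length (take k w)"
      hence j: "0 < j" "j < k" by auto
      hence "height (take j w) \<noteq> 0" using nk[of j] by (simp add: P_def)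
      moreover have "height (take j w) \<ge> 0" using dyck_prefix[OF less.prems] by blast
      ultimately show "0 < height (take j (take k w))" using j by simp
    qed
    have dd: "dyck (drop k w)"
      unfolding dyck_def
    proof (intro conjI allI impI)
      have "height w = 0" using less.prems by (simp add: dyck_def)
      hence "height (take k w) + height (drop k w) = 0"
        by (metis append_take_drop_id height_append)
      thus "height (drop k w) = 0" using Pk by (simp add: P_def)
      fix j show "0 \<le> height (take j (drop k w))"
        using height_take_add[of k j w] dyck_prefix[OF less.prems, of "k+j"] Pk by (simp add: P_def)
    qed
    have "length (drop k w) < length w" using Pk False by (simp add: P_def)
    then obtain ps where "\<forall>p\<in>set ps. indec_dyck p" "concat ps = drop k w"
      using less.hyps dd by blast
    thus ?thesis using ind by (intro exI[of _ "take k w # ps"]) simp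
  qed
qed

lemma rotate_dyck:
  assumes "count_list w True = count_list w False"
  shows "\<exists>k. dyck (rotate k w)"
proof -
  define f where "f = (\<lambda>j. height (take j w))"
  have hw: "height w = 0" using assms by (simp add: height_def)
  define mn where "mn = Min (f ` {..length w})"
  have "mn \<in> f ` {..length w}" unfolding mn_def by (rule Min_in) auto
  then obtain k where k: "k \<le> length w" "f k = mn" by auto
  have mn: "\<And>j. j \<le> length w \<Longrightarrow> f k \<le> f j" using k unfolding mn_def by auto
  have hd: "height (drop k w) = - f k"
    using hw by (metis append_take_drop_id height_append f_def add.commute add_eq_0_iff2 minus_equation_iff)
  have "dyck (drop k w @ take k w)"
    unfolding dyck_def
  proof (intro conjI allI impI)
    show "height (drop k w @ take k w) = 0" using hd by (simp add: height_append f_def)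
    fix j assume "j \<le> length (drop k w @ take k w)"
    show "0 \<le> height (take j (drop k w @ take k w))"
    proof (cases "j \<le> length w - k")
      case True
      have "height (take (k+j) w) = f k + height (take j (drop k w))"
        using height_take_add unfolding f_def by blast
      moreover have "f k \<le> f (k+j)" using mn True k by simp
      ultimately show ?thesis using True by (simp add: f_def)
    next
      case False
      define j' where "j' = j - (length w - k)"
      have "take j (drop k w @ take k w) = drop k w @ take j' (take k w)"
        using False by (simp add: j'_def)
      moreover have "take j' (take k w) = take (min j' k) w" by (simp add: min_def)
      moreover have "f k \<le> f (min j' k)" using mn k by simp
      ultimately show ?thesis using hd by (simp add: height_append f_def)
    qed
  qed
  thus ?thesis using rotate_le[OF k(1)] by metis
qed

theorem mainTheorem2:
  fixes n :: nat
  assumes "n \<ge> 1"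
  shows "(\<forall>C\<in>cyc_seqs n. \<exists>N. (\<lambda>ps. rot_class (concat ps)) ` C = {N})
         \<and> bij_betw cyc_to_necklace (cyc_seqs n) (balanced_necklaces n)"
proof -
  define S where "S = {ps. ps \<noteq> [] \<and> (\<forall>p\<in>set ps. indec_dyck p) \<and> length (concat ps) = 2 * n}"
  define T where "T = {w. length w = 2 * n \<and> count_list w True = count_list w False}"
  have cs: "cyc_seqs n = rot_class ` S" by (simp add: cyc_seqs_def S_def)
  have bn: "balanced_necklaces n = rot_class ` T" by (simp add: balanced_necklaces_def T_def)
  have part1: "\<forall>C\<in>cyc_seqs n. \<exists>N. (\<lambda>ps. rot_class (concat ps)) ` C = {N}"
    unfolding cs using image_rot_class by blast
  have inj: "inj_on cyc_to_necklace (cyc_seqs n)"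
    unfolding cs
  proof (rule inj_onI, clarify)
    fix ps qs assume ps: "ps \<in> S" and qs: "qs \<in> S"
      and e: "cyc_to_necklace (rot_class ps) = cyc_to_necklace (rot_class qs)"
    hence "rot_class (concat ps) = rot_class (concat qs)" by (simp add: cyc_to_necklace_rc)
    moreover have "concat qs \<in> rot_class (concat qs)"
      unfolding rot_class_def by (auto intro: exI[of _ 0])
    ultimately obtain m where mq: "concat qs = rotate m (concat ps)"
      unfolding rot_class_def[of "concat ps"] by auto
    have "\<exists>i. qs = rotate i ps" using key[of ps qs m] ps qs mq by (auto simp: S_def)
    then obtain i where "qs = rotate i ps" by blast
    thus "rot_class ps = rot_class qs" by (simp add: rot_class_rotate)
  qed
  have dyck_bal: "dyck w \<Longrightarrow> count_list w True = count_list w False" for w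
    by (simp add: dyck_def height_def)
  have img: "cyc_to_necklace ` cyc_seqs n = balanced_necklaces n"
  proof
    show "cyc_to_necklace ` cyc_seqs n \<subseteq> balanced_necklaces n"
    proof
      fix N assume "N \<in> cyc_to_necklace ` cyc_seqs n"
      then obtain C where C: "C \<in> cyc_seqs n" "N = cyc_to_necklace C" by blast
      then obtain ps where ps0: "ps \<in> S" "C = rot_class ps" using cs by blast
      have ps: "ps \<in> S" "N = rot_class (concat ps)" using ps0 C by (simp_all add: cyc_to_necklace_rc)
      have d: "dyck (concat ps)" using ps(1) dyck_concat unfolding S_def by blast
      have "length (concat ps) = 2 * n" using ps(1) unfolding S_def by blast
      hence "concat ps \<in> T" using dyck_bal[OF d] unfolding T_def by blast
      thus "N \<in> balanced_necklaces n" using ps bn by auto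
    qed
    show "balanced_necklaces n \<subseteq> cyc_to_necklace ` cyc_seqs n"
    proof
      fix N assume "N \<in> balanced_necklaces n"
      then obtain w where w: "w \<in> T" "N = rot_class w" using bn by auto
      obtain k where k: "dyck (rotate k w)" using rotate_dyck w by (auto simp: T_def)
      obtain ps where ps: "\<forall>p\<in>set ps. indec_dyck p" "concat ps = rotate k w"
        using factorize[OF k] by blast
      have "length w = 2 * n" using w by (simp add: T_def)
      hence lc: "length (concat ps) = 2 * n" using ps(2) by simp
      hence "ps \<noteq> []" using assms by auto
      hence "ps \<in> S" using ps lc by (auto simp: S_def)
      moreover have "cyc_to_necklace (rot_class ps) = N"
        using ps w by (simp add: cyc_to_necklace_rc rot_class_rotate)
      ultimately show "N \<in> cyc_to_necklace ` cyc_seqs n" unfolding cs by blast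
    qed
  qed
  show ?thesis unfolding bij_betw_def using part1 inj img by blast
qed

end
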